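(* Let $n \geq 24$, and let \[ L = \{0, 2, 3, 7, 8, 9, 10\}, \qquad R = \{n-11, n-10, n-9, n-8, n-6, n-3, n-2, n-1\}. \] Let $M$ be a subset of $[11, n-12]$ with the property that every prefix and every suffix of the interval $[11, n-12]$ has more than half of its elements in $M$. Then $S = L \cup M \cup R$ is an MSTD set. The number of MSTD subsets of $\{0, 1, \dots, n-1\}$ obtained in this way (as $M$ ranges over all such subsets) is $\Theta(2^n/n)$.
   Context: For integers $a \le b$, $[a,b]$ denotes the set $\{a, a+1, \dots, b\}$. A more sums than differences (MSTD) set is a finite set $S$ of integers with $|S+S| > |S-S|$, where $S+S = \{s_1+s_2 : s_1,s_2\in S\}$ and $S-S = \{s_1-s_2 : s_1,s_2\in S\}$. A prefix of $[11, n-12]$ is an interval $[11, 10+k]$ and a suffix is an interval $[n-11-k, n-12]$, for $1 \le k \le n-22$. *)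

theory Defs
  imports Main "HOL-Library.Landau_Symbols"
begin

definition sumset :: "int set \<Rightarrow> int set" where
  "sumset S = {a + b | a b. a \<in> S \<and> b \<in> S}"

definition diffset :: "int set \<Rightarrow> int set" where
  "diffset S = {a - b | a b. a \<in> S \<and> b \<in> S}"

definition MSTD :: "int set \<Rightarrow> bool" where
  "MSTD S \<longleftrightarrow> finite S \<and> card (sumset S) > card (diffset S)"

definition Lset :: "int set" where
  "Lset = {0, 2, 3, 7, 8, 9, 10}"

definition Rset :: "nat \<Rightarrow> int set" where
  "Rset n = (let m = int n in {m-11, m-10, m-9, m-8, m-6, m-3, m-2, m-1})"

definition good_middle :: "nat \<Rightarrow> int set \<Rightarrow> bool" where
  "good_middle n M \<longleftrightarrow> M \<subseteq> {11 .. int n - 12} \<and>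
     (\<forall>k::nat. 1 \<le> k \<and> k \<le> n - 22 \<longrightarrow>
        2 * card (M \<inter> {11 .. 10 + int k}) > card {11 .. 10 + int k} \<and>
        2 * card (M \<inter> {int n - 11 - int k .. int n - 12}) > card {int n - 11 - int k .. int n - 12})"

definition mstd_family :: "nat \<Rightarrow> int set set" where
  "mstd_family n = {Lset \<union> M \<union> Rset n | M. good_middle n M}"

end

theory Submission
  imports Defs Complex_Main
begin


definition bv :: "bool \<Rightarrow> int" where "bv b = (if b then 1 else -1)"
definition hs :: "bool list \<Rightarrow> int" where "hs xs = sum_list (map bv xs)"

lemma hs_simps[simp]: "hs [] = 0" "hs (x#xs) = bv x + hs xs" "hs (xs@ys) = hs xs + hs ys"
  by (simp_all add: hs_def)

definition prefpos :: "bool list \<Rightarrow> bool" where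
  "prefpos xs \<longleftrightarrow> (\<forall>k. 1 \<le> k \<and> k \<le> length xs \<longrightarrow> hs (take k xs) > 0)"
definition prefnn :: "bool list \<Rightarrow> bool" where
  "prefnn xs \<longleftrightarrow> (\<forall>k \<le> length xs. hs (take k xs) \<ge> 0)"
definition sufpos :: "bool list \<Rightarrow> bool" where
  "sufpos xs \<longleftrightarrow> (\<forall>k. 1 \<le> k \<and> k \<le> length xs \<longrightarrow> hs (drop (length xs - k) xs) > 0)"
definition sufnp :: "bool list \<Rightarrow> bool" where
  "sufnp xs \<longleftrightarrow> (\<forall>k \<le> length xs. hs (drop k xs) \<le> 0)"

definition Lm :: "nat \<Rightarrow> bool list set" where "Lm m = {xs. length xs = m}"
definition Pc :: "nat \<Rightarrow> nat" where "Pc m = card {xs \<in> Lm m. prefpos xs}"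
definition Nc :: "nat \<Rightarrow> nat" where "Nc m = card {xs \<in> Lm m. prefnn xs}"
definition Qc :: "nat \<Rightarrow> nat" where "Qc m = card {xs \<in> Lm m. prefpos xs \<and> sufpos xs}"

lemma Lm_eq: "Lm m = {xs. set xs \<subseteq> UNIV \<and> length xs = m}" by (simp add: Lm_def)
lemma finite_Lm[simp]: "finite (Lm m)"
  unfolding Lm_eq by (rule finite_lists_length_eq) simp
lemma card_Lm: "card (Lm m) = 2 ^ m"
  unfolding Lm_eq using card_lists_length_eq[of "UNIV::bool set" m] by simp

lemma finite_sub[simp]: "finite {xs \<in> Lm m. P xs}" by simp

lemma hs_take_Cons: "hs (take (Suc j) (x#xs)) = bv x + hs (take j xs)" by simp

lemma Pc_Suc: "Pc (Suc k) = Nc k"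
proof -
  have "{xs \<in> Lm (Suc k). prefpos xs} = Cons True ` {xs \<in> Lm k. prefnn xs}"
  proof (rule set_eqI, rule iffI)
    fix ys assume "ys \<in> {xs \<in> Lm (Suc k). prefpos xs}"
    then have L: "length ys = Suc k" and P: "prefpos ys" by (auto simp: Lm_def)
    then obtain y xs where ys: "ys = y # xs" by (cases ys) auto
    have "hs (take 1 ys) > 0" using P L unfolding prefpos_def by auto
    then have y: "y" using ys by (auto simp: bv_def split: if_splits)
    have "prefnn xs" unfolding prefnn_def
    proof (intro allI impI)
      fix j assume "j \<le> length xs"
      then have "hs (take (Suc j) ys) > 0" using P L ys unfolding prefpos_def by auto
      then show "hs (take j xs) \<ge> 0" using ys y by (simp add: bv_def)
    qed
    then show "ys \<in> Cons True ` {xs \<in> Lm k. prefnn xs}" using ys y L by (auto simp: Lm_def)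
  next
    fix ys assume "ys \<in> Cons True ` {xs \<in> Lm k. prefnn xs}"
    then obtain xs where ys: "ys = True # xs" and L: "length xs = k" and N: "prefnn xs"
      by (auto simp: Lm_def)
    have "prefpos ys" unfolding prefpos_def
    proof (intro allI impI)
      fix j assume j: "1 \<le> j \<and> j \<le> length ys"
      then obtain i where i: "j = Suc i" by (cases j) auto
      have "hs (take i xs) \<ge> 0" using N j i ys unfolding prefnn_def by auto
      then show "hs (take j ys) > 0" using ys i by (simp add: bv_def)
    qed
    then show "ys \<in> {xs \<in> Lm (Suc k). prefpos xs}" using ys L by (auto simp: Lm_def)
  qed
  then show ?thesis unfolding Pc_def Nc_def by (simp add: card_image)
qed

lemma Nc_Suc_le: "Nc (Suc k) \<le> 2 * Nc k"
proof -
  have "{xs \<in> Lm (Suc k). prefnn xs} \<subseteq> (\<lambda>(ys,b). ys @ [b]) ` ({xs \<in> Lm k. prefnn xs} \<times> UNIV)"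
  proof
    fix xs assume "xs \<in> {xs \<in> Lm (Suc k). prefnn xs}"
    then have L: "length xs = Suc k" and N: "prefnn xs" by (auto simp: Lm_def)
    have e: "xs = butlast xs @ [last xs]" using L
      by (metis append_butlast_last_id list.size(3) nat.distinct(1))
    have "prefnn (butlast xs)" unfolding prefnn_def
    proof (intro allI impI)
      fix j assume "j \<le> length (butlast xs)"
      then have "take j (butlast xs) = take j xs" using L by (simp add: butlast_conv_take min_def split: if_splits)
      then show "hs (take j (butlast xs)) \<ge> 0" using N \<open>j \<le> _\<close> L unfolding prefnn_def by auto
    qed
    then show "xs \<in> (\<lambda>(ys,b). ys @ [b]) ` ({xs \<in> Lm k. prefnn xs} \<times> UNIV)"
      using e L by (auto simp: Lm_def intro!: image_eqI[where x="(butlast xs, last xs)"])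
  qed
  then have "Nc (Suc k) \<le> card ((\<lambda>(ys,b). ys @ [b]) ` ({xs \<in> Lm k. prefnn xs} \<times> (UNIV::bool set)))"
    unfolding Nc_def by (intro card_mono) auto
  also have "\<dots> \<le> card ({xs \<in> Lm k. prefnn xs} \<times> (UNIV::bool set))" by (rule card_image_le) simp
  also have "\<dots> = 2 * Nc k" by (simp add: card_cartesian_product Nc_def)
  finally show ?thesis .
qed

lemma Nc_mono2: "j \<le> k \<Longrightarrow> Nc k \<le> 2 ^ (k - j) * Nc j"
proof (induction k)
  case 0 then show ?case by simp
next
  case (Suc k)
  show ?case
  proof (cases "j = Suc k")
    case True then show ?thesis by simp
  next
    case False
    then have "j \<le> k" using Suc by simp
    then have "Nc k \<le> 2 ^ (k - j) * Nc j" using Suc by simp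
    then have "Nc (Suc k) \<le> 2 * (2 ^ (k - j) * Nc j)" using Nc_Suc_le[of k] by linarith
    also have "\<dots> = 2 ^ (Suc k - j) * Nc j" using \<open>j \<le> k\<close> by (simp add: Suc_diff_le)
    finally show ?thesis .
  qed
qed




lemma hs_map_Not: "hs (map Not xs) = - hs xs"
  by (induction xs) (auto simp: bv_def)
lemma hs_rev: "hs (rev xs) = hs xs"
  by (simp add: hs_def rev_map[symmetric] sum_list_rev)

lemma card_sufnp: "card {A \<in> Lm t. sufnp A} = Nc t"
proof -
  let ?f = "\<lambda>A. rev (map Not A)"
  have inj: "inj ?f" by (rule injI) (simp add: inj_map_eq_map[of Not] inj_on_def)
  have "?f ` {A \<in> Lm t. sufnp A} = {xs \<in> Lm t. prefnn xs}"
  proof (rule set_eqI, rule iffI)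
    fix ys assume "ys \<in> ?f ` {A \<in> Lm t. sufnp A}"
    then obtain A where ys: "ys = ?f A" and L: "length A = t" and S: "sufnp A" by (auto simp: Lm_def)
    have "prefnn ys" unfolding prefnn_def
    proof (intro allI impI)
      fix k assume "k \<le> length ys"
      then have "hs (drop (length A - k) A) \<le> 0" using S unfolding sufnp_def by auto
      then show "hs (take k ys) \<ge> 0" using ys
        by (simp add: take_rev hs_rev drop_map hs_map_Not)
    qed
    then show "ys \<in> {xs \<in> Lm t. prefnn xs}" using ys L by (simp add: Lm_def)
  next
    fix ys assume "ys \<in> {xs \<in> Lm t. prefnn xs}"
    then have L: "length ys = t" and N: "prefnn ys" by (auto simp: Lm_def)
    let ?A = "?f ys"
    have e: "ys = ?f ?A" by (simp add: rev_map[symmetric] comp_def)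
    have "sufnp ?A" unfolding sufnp_def
    proof (intro allI impI)
      fix k assume k: "k \<le> length ?A"
      have "drop k ?A = rev (map Not (take (length ys - k) ys))"
        using k by (simp add: drop_rev take_map)
      moreover have "hs (take (length ys - k) ys) \<ge> 0" using N unfolding prefnn_def by simp
      ultimately show "hs (drop k ?A) \<le> 0" by (simp add: hs_rev hs_map_Not)
    qed
    then show "ys \<in> ?f ` {A \<in> Lm t. sufnp A}" using e L by (intro image_eqI[where x="?A"]) (auto simp: Lm_def)
  qed
  then have "card {xs \<in> Lm t. prefnn xs} = card (?f ` {A \<in> Lm t. sufnp A})" by simp
  also have "\<dots> = card {A \<in> Lm t. sufnp A}" by (rule card_image) (rule inj_on_subset[OF inj], simp)
  finally show ?thesis unfolding Nc_def by simp
qed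

definition D :: "nat \<Rightarrow> nat \<Rightarrow> bool list set" where
  "D l t = (\<lambda>(A,B). A @ B) ` ({A \<in> Lm t. sufnp A} \<times> {B \<in> Lm (l - t). prefpos B})"

lemma card_D: "card (D l t) = Nc t * Pc (l - t)"
proof -
  have "inj_on (\<lambda>(A,B). A @ B) ({A \<in> Lm t. sufnp A} \<times> {B \<in> Lm (l - t). prefpos B})"
    by (auto simp: inj_on_def Lm_def)
  then show ?thesis unfolding D_def
    by (simp add: card_image card_cartesian_product card_sufnp Pc_def)
qed

lemma hs_take_split: "k \<le> t \<Longrightarrow> hs (take t xs) = hs (take k xs) + hs (drop k (take t xs))"
proof -
  assume "k \<le> t"
  have "take t xs = take k (take t xs) @ drop k (take t xs)" by (rule append_take_drop_id[symmetric])
  then have "hs (take t xs) = hs (take k (take t xs)) + hs (drop k (take t xs))" by (metis hs_simps(3))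
  moreover have "take k (take t xs) = take k xs" using \<open>k \<le> t\<close> by (simp add: min_def)
  ultimately show ?thesis by simp
qed

lemma D_cover: "Lm l = (\<Union>t\<in>{0..l}. D l t)"
proof (rule set_eqI, rule iffI)
  fix xs assume "xs \<in> Lm l"
  then have L: "length xs = l" by (simp add: Lm_def)
  define h where "h j = hs (take j xs)" for j
  define v where "v = Min (h ` {0..l})"
  define S where "S = {j \<in> {0..l}. h j = v}"
  have fS: "finite S" by (simp add: S_def)
  have vmem: "v \<in> h ` {0..l}" unfolding v_def by (intro Min_in) auto
  then have neS: "S \<noteq> {}" by (auto simp: S_def)
  define t where "t = Max S"
  have tS: "t \<in> S" unfolding t_def using fS neS by (rule Max_in)
  then have tl: "t \<le> l" and ht: "h t = v" by (auto simp: S_def)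
  have vmin: "\<And>j. j \<le> l \<Longrightarrow> v \<le> h j" unfolding v_def by (intro Min_le) auto
  have after: "\<And>j. t < j \<Longrightarrow> j \<le> l \<Longrightarrow> h t < h j"
  proof -
    fix j assume "t < j" "j \<le> l"
    { assume "h j = v" then have "j \<in> S" using \<open>j \<le> l\<close> by (auto simp: S_def)
      then have "j \<le> t" unfolding t_def using fS by (simp add: Max_ge) }
    then show "h t < h j" using vmin[OF \<open>j \<le> l\<close>] ht \<open>t < j\<close> by force
  qed
  let ?A = "take t xs" and ?B = "drop t xs"
  have sA: "sufnp ?A" unfolding sufnp_def
  proof (intro allI impI)
    fix k assume k: "k \<le> length ?A"
    then have "k \<le> t" by simp
    then have "hs (take t xs) = hs (take k xs) + hs (drop k ?A)" by (rule hs_take_split)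
    moreover have "v \<le> h k" using \<open>k \<le> t\<close> tl by (intro vmin) simp
    ultimately show "hs (drop k ?A) \<le> 0" using ht by (simp add: h_def)
  qed
  have pB: "prefpos ?B" unfolding prefpos_def
  proof (intro allI impI)
    fix k assume k: "1 \<le> k \<and> k \<le> length ?B"
    have "take (t + k) xs = ?A @ take k ?B" by (simp add: take_add)
    then have "h (t + k) = h t + hs (take k ?B)" by (simp add: h_def)
    moreover have "h t < h (t + k)" using k L by (intro after) auto
    ultimately show "hs (take k ?B) > 0" by simp
  qed
  have "xs \<in> D l t" unfolding D_def
    using sA pB L tl by (auto simp: Lm_def intro!: image_eqI[where x="(?A, ?B)"])
  then show "xs \<in> (\<Union>t\<in>{0..l}. D l t)" using tl by auto
next
  fix xs assume "xs \<in> (\<Union>t\<in>{0..l}. D l t)"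
  then show "xs \<in> Lm l" by (auto simp: D_def Lm_def)
qed

lemma D_disj_aux:
  assumes "length A = t" "length A' = t'" "t < t'" "A @ B = A' @ B'" "sufnp A'" "prefpos B"
  shows False
proof -
  let ?C = "take (t' - t) B"
  have "A' = take t' (A' @ B')" using assms(2) by simp
  also have "\<dots> = take t' (A @ B)" using assms(4) by simp
  also have "\<dots> = A @ ?C" using assms(1,3) by (simp add: take_append)
  finally have e: "A' = A @ ?C" .
  have lB: "t' - t \<le> length B"
  proof -
    have "length (A' @ B') = length (A @ B)" using assms(4) by simp
    then show ?thesis using assms(1,2) by simp
  qed
  have "hs (drop t A') \<le> 0" using assms(5,2,3) unfolding sufnp_def by simp
  moreover have "drop t A' = ?C" using e assms(1) by simp
  moreover have "hs ?C > 0" using assms(6) lB assms(3) unfolding prefpos_def by simp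
  ultimately show False by simp
qed

lemma D_disj: "t \<noteq> t' \<Longrightarrow> D l t \<inter> D l t' = {}"
proof -
  assume ne: "t \<noteq> t'"
  { fix xs assume "xs \<in> D l t" "xs \<in> D l t'"
    obtain A B where 1: "xs = A @ B" "length A = t" "sufnp A" "prefpos B"
      using \<open>xs \<in> D l t\<close> unfolding D_def Lm_def by auto
    obtain A' B' where 2: "xs = A' @ B'" "length A' = t'" "sufnp A'" "prefpos B'"
      using \<open>xs \<in> D l t'\<close> unfolding D_def Lm_def by auto
    have False using 1 2 ne D_disj_aux[of A t A' t' B B'] D_disj_aux[of A' t' A t B' B]
      by (cases "t < t'") auto }
  then show ?thesis by blast
qed
lemma decomp: "2 ^ l = (\<Sum>t\<in>{0..l}. Nc t * Pc (l - t))"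
proof -
  have "2 ^ l = card (\<Union>t\<in>{0..l}. D l t)" using D_cover card_Lm by metis
  also have "\<dots> = (\<Sum>t\<in>{0..l}. card (D l t))"
    apply (rule card_UN_disjoint) apply simp apply (simp add: D_def) using D_disj apply blast done
  finally show ?thesis by (simp add: card_D)
qed




lemma Pc_0: "Pc 0 = 1"
proof -
  have "{xs \<in> Lm 0. prefpos xs} = {[]}" by (auto simp: Lm_def prefpos_def)
  then show ?thesis by (simp add: Pc_def)
qed

lemma Nc_upper: "(k+1) * Nc k ^ 2 \<le> 2 * 4 ^ k"
proof -
  have d: "2 ^ (k+1) = (\<Sum>t\<in>{0..k+1}. Nc t * Pc (k + 1 - t))" by (rule decomp)
  have "(\<Sum>t\<in>{0..k}. Nc t * Nc (k - t)) = (\<Sum>t\<in>{0..k}. Nc t * Pc (k + 1 - t))"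
    by (intro sum.cong) (auto simp: Pc_Suc[symmetric] Suc_diff_le)
  also have "\<dots> \<le> (\<Sum>t\<in>{0..k+1}. Nc t * Pc (k + 1 - t))"
    by (intro sum_mono2) auto
  finally have s: "(\<Sum>t\<in>{0..k}. Nc t * Nc (k - t)) \<le> 2 ^ (k+1)" using d by simp
  have "(k+1) * Nc k ^ 2 = (\<Sum>t\<in>{0..k}. Nc k ^ 2)" by simp
  also have "\<dots> \<le> (\<Sum>t\<in>{0..k}. 2 ^ k * (Nc t * Nc (k - t)))"
  proof (intro sum_mono)
    fix t assume "t \<in> {0..k}"
    then have tk: "t \<le> k" by simp
    have 1: "Nc k \<le> 2 ^ (k - t) * Nc t" using tk by (rule Nc_mono2)
    have 2: "Nc k \<le> 2 ^ t * Nc (k - t)" using Nc_mono2[of "k - t" k] tk by simp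
    have "Nc k ^ 2 \<le> (2 ^ (k - t) * Nc t) * (2 ^ t * Nc (k - t))"
      unfolding power2_eq_square by (rule mult_le_mono[OF 1 2])
    also have "\<dots> = 2 ^ (k - t + t) * (Nc t * Nc (k - t))" by (simp add: power_add)
    finally show "Nc k ^ 2 \<le> 2 ^ k * (Nc t * Nc (k - t))" using tk by simp
  qed
  also have "\<dots> = 2 ^ k * (\<Sum>t\<in>{0..k}. Nc t * Nc (k - t))" by (simp add: sum_distrib_left)
  also have "\<dots> \<le> 2 ^ k * 2 ^ (k+1)" using s by simp
  also have "\<dots> = 2 * 4 ^ k" by (simp add: power_add power_mult_distrib[symmetric])
  finally show ?thesis .
qed

definition a :: "nat \<Rightarrow> real" where "a t = Nc t / 2 ^ t"

lemma a_nonneg: "a t \<ge> 0" by (simp add: a_def)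

lemma a_upper: "a t \<le> sqrt 2 / sqrt (real t + 1)"
proof -
  have "real ((t+1) * Nc t ^ 2) \<le> real (2 * 4 ^ t)" using Nc_upper[of t] by linarith
  then have h: "(t+1) * (Nc t) ^ 2 \<le> 2 * (4::real) ^ t" by simp
  have f4: "(4::real) ^ t = (2 ^ t)^2" unfolding power2_eq_square power_mult_distrib[symmetric] by simp
  have "a t ^ 2 = Nc t ^ 2 / 4 ^ t" unfolding f4 by (simp add: a_def power_divide)
  also have "\<dots> \<le> 2 / (t + 1)" using h by (simp add: field_simps)
  finally have "a t \<le> sqrt (2 / (t+1))" by (rule real_le_rsqrt)
  then show ?thesis by (simp add: real_sqrt_divide add.commute)
qed

lemma a_mono: "j \<le> k \<Longrightarrow> a k \<le> a j"
proof -
  assume jk: "j \<le> k"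
  have "real (Nc k) \<le> real (2 ^ (k - j) * Nc j)" using Nc_mono2[OF jk] by linarith
  then have "Nc k \<le> 2 ^ (k - j) * real (Nc j)" by simp
  then have "Nc k / 2 ^ k \<le> 2 ^ (k - j) * real (Nc j) / 2 ^ k" by (simp add: divide_right_mono)
  also have "\<dots> = Nc j / 2 ^ j" using jk by (simp add: power_diff field_simps)
  finally show ?thesis by (simp add: a_def)
qed

lemma sum_isqrt: "(\<Sum>t\<in>{0..n}. 1 / sqrt (real t + 1)) \<le> 2 * sqrt (real n + 1)"
proof (induction n)
  case 0 then show ?case by simp
next
  case (Suc n)
  have key: "2 * sqrt (real n + 1) + 1 / sqrt (real n + 2) \<le> 2 * sqrt (real n + 2)"
  proof -
    have p: "sqrt (real n + 2) > 0" by simp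
    have "sqrt (real n + 1) * sqrt (real n + 2) \<le> real n + 3/2"
    proof -
      have "sqrt (real n + 1) * sqrt (real n + 2) = sqrt ((real n + 1) * (real n + 2))" by (simp add: real_sqrt_mult)
      also have "\<dots> \<le> real n + 3/2" by (rule real_le_lsqrt) (auto simp: power2_eq_square algebra_simps)
      finally show ?thesis .
    qed
    then have "2 * sqrt (real n + 1) * sqrt (real n + 2) + 1 \<le> 2 * (sqrt (real n + 2) * sqrt (real n + 2))"
      by simp
    then show ?thesis using p by (simp add: field_simps)
  qed
  have "(\<Sum>t\<in>{0..Suc n}. 1 / sqrt (real t + 1)) = (\<Sum>t\<in>{0..n}. 1 / sqrt (real t + 1)) + 1 / sqrt (real n + 2)"
    by (simp add: add.commute)
  also have "\<dots> \<le> 2 * sqrt (real n + 1) + 1 / sqrt (real n + 2)" using Suc by simp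
  also have "\<dots> \<le> 2 * sqrt (real (Suc n) + 1)" using key by (simp add: add.commute)
  finally show ?case .
qed

lemma sum_a: "(\<Sum>t\<in>{0..n}. a t) \<le> 2 * sqrt 2 * sqrt (real n + 1)"
proof -
  have "(\<Sum>t\<in>{0..n}. a t) \<le> (\<Sum>t\<in>{0..n}. sqrt 2 * (1 / sqrt (real t + 1)))"
  proof (intro sum_mono)
    fix t have "a t \<le> sqrt 2 / sqrt (real t + 1)" using a_upper[of t] by simp
    then show "a t \<le> sqrt 2 * (1 / sqrt (real t + 1))" by simp
  qed
  also have "\<dots> = sqrt 2 * (\<Sum>t\<in>{0..n}. 1 / sqrt (real t + 1))" by (simp add: sum_distrib_left)
  also have "\<dots> \<le> sqrt 2 * (2 * sqrt (real n + 1))" using sum_isqrt by (intro mult_left_mono) auto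
  finally show ?thesis by simp
qed

lemma a_lower: assumes "k \<ge> 3" shows "a k \<ge> 1 / (4 * sqrt 2 * sqrt (2 * real k + 1))"
proof -
  let ?l = "2*k+1"
  have d: "real (2 ^ ?l) = real (\<Sum>t\<in>{0..?l}. Nc t * Pc (?l - t))" using decomp[of ?l] by simp
  have "{0..?l} = insert ?l {0..2*k}" by auto
  then have "(\<Sum>t\<in>{0..?l}. Nc t * Pc (?l - t)) = Nc ?l * Pc 0 + (\<Sum>t\<in>{0..2*k}. Nc t * Pc (?l - t))"
    by simp
  also have "(\<Sum>t\<in>{0..2*k}. Nc t * Pc (?l - t)) = (\<Sum>t\<in>{0..2*k}. Nc t * Nc (2*k - t))"
    by (intro sum.cong) (auto simp: Pc_Suc[symmetric] Suc_diff_le)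
  finally have e: "(2::real) ^ ?l = Nc ?l + (\<Sum>t\<in>{0..2*k}. real (Nc t * Nc (2*k - t)))"
    using d Pc_0 by simp
  have e2: "1 = a ?l + (1/2) * (\<Sum>t\<in>{0..2*k}. a t * a (2*k - t))"
  proof -
    have "(\<Sum>t\<in>{0..2*k}. a t * a (2*k - t)) = (\<Sum>t\<in>{0..2*k}. real (Nc t * Nc (2*k - t)) / 2 ^ (2*k))"
      by (intro sum.cong) (auto simp: a_def power_add[symmetric])
    also have "\<dots> = (\<Sum>t\<in>{0..2*k}. real (Nc t * Nc (2*k - t))) / 2 ^ (2*k)" by (simp add: sum_divide_distrib)
    finally have "(\<Sum>t\<in>{0..2*k}. a t * a (2*k - t)) = ((2::real) ^ ?l - Nc ?l) / 2 ^ (2*k)" using e by simp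
    then show ?thesis by (simp add: a_def field_simps)
  qed
  have trm: "a t * a (2*k - t) \<le> a k * (a t + a (2*k - t))" for t
  proof (cases "t \<le> k")
    case True
    then have "a (2*k - t) \<le> a k" by (intro a_mono) simp
    then have "a t * a (2*k - t) \<le> a t * a k" by (intro mult_left_mono) (auto simp: a_nonneg)
    moreover have "a k * a (2*k-t) \<ge> 0" using a_nonneg[of k] a_nonneg[of "2*k-t"] by simp
    ultimately show ?thesis by (simp add: algebra_simps)
  next
    case False
    then have "a t \<le> a k" by (intro a_mono) simp
    then have "a t * a (2*k - t) \<le> a k * a (2*k - t)" by (intro mult_right_mono) (auto simp: a_nonneg)
    moreover have "a k * a t \<ge> 0" using a_nonneg[of k] a_nonneg[of t] by simp
    ultimately show ?thesis by (simp add: algebra_simps)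
  qed
  have rev: "(\<Sum>t\<in>{0..2*k}. a (2*k - t)) = (\<Sum>t\<in>{0..2*k}. a t)"
    using sum.atLeastAtMost_rev[of a 0 "2*k"] by simp
  have "(\<Sum>t\<in>{0..2*k}. a t * a (2*k - t)) \<le> (\<Sum>t\<in>{0..2*k}. a k * (a t + a (2*k - t)))"
    by (intro sum_mono trm)
  also have "\<dots> = a k * (2 * (\<Sum>t\<in>{0..2*k}. a t))" by (simp add: sum_distrib_left[symmetric] sum.distrib rev)
  also have "\<dots> \<le> a k * (2 * (2 * sqrt 2 * sqrt (real (2*k) + 1)))"
    using sum_a[of "2*k"] a_nonneg[of k] by (intro mult_left_mono) auto
  finally have s: "(\<Sum>t\<in>{0..2*k}. a t * a (2*k - t)) \<le> a k * (4 * sqrt 2 * sqrt (2 * real k + 1))"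
    by simp
  have "a ?l \<le> sqrt 2 / sqrt (real ?l + 1)" using a_upper[of ?l] by simp
  also have "\<dots> \<le> 1/2"
  proof -
    have "sqrt (real ?l + 1) \<ge> 2 * sqrt 2"
    proof -
      have "sqrt (8::real) = sqrt (2^2 * 2)" by simp
      also have "\<dots> = 2 * sqrt 2" by (simp only: real_sqrt_mult real_sqrt_abs)
      finally have "2 * sqrt 2 = sqrt (8::real)" by simp
      moreover have "sqrt 8 \<le> sqrt (real ?l + 1)" using assms by simp
      ultimately show ?thesis by simp
    qed
    then show ?thesis by (simp add: field_simps)
  qed
  finally have "1/2 \<le> (1/2) * (a k * (4 * sqrt 2 * sqrt (2 * real k + 1)))" using e2 s by linarith
  then have "1 \<le> a k * (4 * sqrt 2 * sqrt (2 * real k + 1))" by simp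
  moreover have "4 * sqrt 2 * sqrt (2 * real k + 1) > 0" by simp
  ultimately show ?thesis by (simp add: field_simps)
qed




definition upc :: "bool list set \<Rightarrow> bool" where
  "upc A \<longleftrightarrow> (\<forall>xs ys. xs \<in> A \<longrightarrow> list_all2 (\<lambda>a b. a \<longrightarrow> b) xs ys \<longrightarrow> ys \<in> A)"

lemma nat_cheb: fixes a0 a1 b0 b1 :: nat
  assumes "a0 \<le> a1" "b0 \<le> b1" shows "(a0+a1)*(b0+b1) \<le> 2*(a0*b0+a1*b1)"
proof -
  obtain d e where "a1 = a0 + d" "b1 = b0 + e" using assms le_Suc_ex by blast
  then show ?thesis by (simp add: algebra_simps)
qed

lemma Lm_Suc_split: "A \<subseteq> Lm (Suc m) \<Longrightarrow> A = Cons False ` {xs. False # xs \<in> A} \<union> Cons True ` {xs. True # xs \<in> A}"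
proof (rule set_eqI, rule iffI)
  fix ys assume "A \<subseteq> Lm (Suc m)" "ys \<in> A"
  then obtain y xs where "ys = y # xs" by (cases ys) (auto simp: Lm_def)
  then show "ys \<in> Cons False ` {xs. False # xs \<in> A} \<union> Cons True ` {xs. True # xs \<in> A}"
    using \<open>ys \<in> A\<close> by (cases y) auto
qed auto

lemma card_split: assumes "A \<subseteq> Lm (Suc m)"
  shows "card A = card {xs. False # xs \<in> A} + card {xs. True # xs \<in> A}"
proof -
  have f: "finite A" using assms finite_subset finite_Lm by blast
  have f0: "finite {xs. False # xs \<in> A}" using assms by (intro finite_subset[OF _ finite_Lm[of m]]) (auto simp: Lm_def)
  have f1: "finite {xs. True # xs \<in> A}" using assms by (intro finite_subset[OF _ finite_Lm[of m]]) (auto simp: Lm_def)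
  have "card A = card (Cons False ` {xs. False # xs \<in> A} \<union> Cons True ` {xs. True # xs \<in> A})"
    using Lm_Suc_split[OF assms] by simp
  also have "\<dots> = card (Cons False ` {xs. False # xs \<in> A}) + card (Cons True ` {xs. True # xs \<in> A})"
    by (rule card_Un_disjoint) (use f0 f1 in auto)
  also have "\<dots> = card {xs. False # xs \<in> A} + card {xs. True # xs \<in> A}"
    by (simp add: card_image)
  finally show ?thesis .
qed

lemma harris:
  "A \<subseteq> Lm m \<Longrightarrow> B \<subseteq> Lm m \<Longrightarrow> upc A \<Longrightarrow> upc B \<Longrightarrow> card A * card B \<le> 2 ^ m * card (A \<inter> B)"
proof (induction m arbitrary: A B)
  case 0
  have L0: "Lm 0 = {[]}" by (auto simp: Lm_def)
  show ?case
  proof (cases "A = {} \<or> B = {}")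
    case True then show ?thesis by auto
  next
    case False
    then have "A = {[]}" "B = {[]}" using 0 L0 by auto
    then show ?thesis by simp
  qed
next
  case (Suc m)
  define A0 where "A0 = {xs. False # xs \<in> A}"
  define A1 where "A1 = {xs. True # xs \<in> A}"
  define B0 where "B0 = {xs. False # xs \<in> B}"
  define B1 where "B1 = {xs. True # xs \<in> B}"
  have sub: "A0 \<subseteq> Lm m" "A1 \<subseteq> Lm m" "B0 \<subseteq> Lm m" "B1 \<subseteq> Lm m"
    using Suc.prems unfolding A0_def A1_def B0_def B1_def Lm_def by auto
  have up: "upc A0" "upc A1" "upc B0" "upc B1"
    using Suc.prems unfolding A0_def A1_def B0_def B1_def upc_def by auto
  have refl: "list_all2 (\<lambda>a b. a \<longrightarrow> b) xs xs" for xs by (induction xs) auto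
  have "A0 \<subseteq> A1" using Suc.prems(3) refl unfolding A0_def A1_def upc_def by fastforce
  moreover have "B0 \<subseteq> B1" using Suc.prems(4) refl unfolding B0_def B1_def upc_def by fastforce
  ultimately have le: "card A0 \<le> card A1" "card B0 \<le> card B1"
    using sub by (auto intro: card_mono finite_subset[OF _ finite_Lm])
  have cA: "card A = card A0 + card A1" unfolding A0_def A1_def by (rule card_split[OF Suc.prems(1)])
  have cB: "card B = card B0 + card B1" unfolding B0_def B1_def by (rule card_split[OF Suc.prems(2)])
  have cAB: "card (A \<inter> B) = card (A0 \<inter> B0) + card (A1 \<inter> B1)"
    using card_split[of "A \<inter> B" m] Suc.prems(1) unfolding A0_def A1_def B0_def B1_def
    by (auto simp: Int_def)
  have i0: "card A0 * card B0 \<le> 2 ^ m * card (A0 \<inter> B0)" using Suc.IH sub up by blast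
  have i1: "card A1 * card B1 \<le> 2 ^ m * card (A1 \<inter> B1)" using Suc.IH sub up by blast
  have "card A * card B \<le> 2 * (card A0 * card B0 + card A1 * card B1)"
    unfolding cA cB by (rule nat_cheb[OF le])
  also have "\<dots> \<le> 2 * (2 ^ m * card (A0 \<inter> B0) + 2 ^ m * card (A1 \<inter> B1))" using i0 i1 by simp
  also have "\<dots> = 2 ^ Suc m * card (A \<inter> B)" by (simp add: cAB algebra_simps)
  finally show ?case .
qed

lemma hs_mono: "list_all2 (\<lambda>a b. a \<longrightarrow> b) xs ys \<Longrightarrow> hs xs \<le> hs ys"
  by (induction rule: list_all2_induct) (auto simp: bv_def)

lemma upc_prefpos: "upc {xs \<in> Lm m. prefpos xs}"
  unfolding upc_def
proof (intro allI impI)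
  fix xs ys assume "xs \<in> {xs \<in> Lm m. prefpos xs}" and r: "list_all2 (\<lambda>a b. a \<longrightarrow> b) xs ys"
  then have L: "length xs = m" "prefpos xs" by (auto simp: Lm_def)
  have ly: "length ys = length xs" using r by (simp add: list_all2_lengthD)
  have "prefpos ys" unfolding prefpos_def
  proof (intro allI impI)
    fix k assume k: "1 \<le> k \<and> k \<le> length ys"
    have "hs (take k xs) > 0" using L k ly unfolding prefpos_def by auto
    moreover have "hs (take k xs) \<le> hs (take k ys)" by (rule hs_mono[OF list_all2_takeI[OF r]])
    ultimately show "hs (take k ys) > 0" by simp
  qed
  then show "ys \<in> {xs \<in> Lm m. prefpos xs}" using L ly by (simp add: Lm_def)
qed

lemma upc_sufpos: "upc {xs \<in> Lm m. sufpos xs}"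
  unfolding upc_def
proof (intro allI impI)
  fix xs ys assume "xs \<in> {xs \<in> Lm m. sufpos xs}" and r: "list_all2 (\<lambda>a b. a \<longrightarrow> b) xs ys"
  then have L: "length xs = m" "sufpos xs" by (auto simp: Lm_def)
  have ly: "length ys = length xs" using r by (simp add: list_all2_lengthD)
  have "sufpos ys" unfolding sufpos_def
  proof (intro allI impI)
    fix k assume k: "1 \<le> k \<and> k \<le> length ys"
    have "hs (drop (length xs - k) xs) > 0" using L k ly unfolding sufpos_def by auto
    moreover have "hs (drop (length xs - k) xs) \<le> hs (drop (length ys - k) ys)"
      using hs_mono[OF list_all2_dropI[OF r]] ly by simp
    ultimately show "hs (drop (length ys - k) ys) > 0" by simp
  qed
  then show "ys \<in> {xs \<in> Lm m. sufpos xs}" using L ly by (simp add: Lm_def)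
qed

lemma sufpos_rev: "sufpos ys \<longleftrightarrow> prefpos (rev ys)"
  unfolding sufpos_def prefpos_def by (simp add: take_rev hs_rev)

lemma card_sufpos: "card {xs \<in> Lm m. sufpos xs} = Pc m"
proof -
  have "rev ` {xs \<in> Lm m. sufpos xs} = {xs \<in> Lm m. prefpos xs}"
    by (auto simp: Lm_def sufpos_rev intro!: image_eqI[where x="rev _"])
  then show ?thesis unfolding Pc_def by (metis card_image inj_on_rev)
qed

lemma Qc_lower: "Pc m * Pc m \<le> 2 ^ m * Qc m"
proof -
  have "{xs \<in> Lm m. prefpos xs} \<inter> {xs \<in> Lm m. sufpos xs} = {xs \<in> Lm m. prefpos xs \<and> sufpos xs}" by auto
  moreover have "card {xs \<in> Lm m. prefpos xs} * card {xs \<in> Lm m. sufpos xs} \<le> 2 ^ m * card ({xs \<in> Lm m. prefpos xs} \<inter> {xs \<in> Lm m. sufpos xs})"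
    by (rule harris) (auto simp: upc_prefpos upc_sufpos)
  ultimately show ?thesis using card_sufpos[of m] unfolding Qc_def Pc_def by simp
qed

lemma Qc_upper: assumes "t \<le> m" shows "Qc m \<le> Pc t * Pc (m - t)"
proof -
  let ?f = "\<lambda>xs. (take t xs, rev (drop t xs))"
  have inj: "inj ?f"
    by (rule injI) (metis append_take_drop_id prod.inject rev_rev_ident)
  have "?f ` {xs \<in> Lm m. prefpos xs \<and> sufpos xs} \<subseteq> {xs \<in> Lm t. prefpos xs} \<times> {xs \<in> Lm (m - t). prefpos xs}"
  proof
    fix p assume "p \<in> ?f ` {xs \<in> Lm m. prefpos xs \<and> sufpos xs}"
    then obtain xs where p: "p = ?f xs" and L: "length xs = m" and P: "prefpos xs" and S: "sufpos xs"
      by (auto simp: Lm_def)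
    have "prefpos (take t xs)" unfolding prefpos_def
    proof (intro allI impI)
      fix k assume "1 \<le> k \<and> k \<le> length (take t xs)"
      then have "k \<le> t" "1 \<le> k" using L assms by auto
      then show "hs (take k (take t xs)) > 0" using P L assms unfolding prefpos_def by (simp add: min_absorb1)
    qed
    moreover have "sufpos (drop t xs)" unfolding sufpos_def
    proof (intro allI impI)
      fix k assume k: "1 \<le> k \<and> k \<le> length (drop t xs)"
      have "drop (length (drop t xs) - k) (drop t xs) = drop (length xs - k) xs"
      proof -
        have "t + (length xs - t - k) = length xs - k" using k L assms by simp linarith
        then show ?thesis by (simp add: add.commute)
      qed
      moreover have "hs (drop (length xs - k) xs) > 0" using S k unfolding sufpos_def by auto
      ultimately show "hs (drop (length (drop t xs) - k) (drop t xs)) > 0" by simp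
    qed
    ultimately show "p \<in> {xs \<in> Lm t. prefpos xs} \<times> {xs \<in> Lm (m - t). prefpos xs}"
      using p L assms by (auto simp: Lm_def sufpos_rev)
  qed
  then have "card (?f ` {xs \<in> Lm m. prefpos xs \<and> sufpos xs}) \<le> card ({xs \<in> Lm t. prefpos xs} \<times> {xs \<in> Lm (m - t). prefpos xs})"
    by (intro card_mono) auto
  moreover have "card (?f ` {xs \<in> Lm m. prefpos xs \<and> sufpos xs}) = Qc m"
    unfolding Qc_def by (rule card_image) (rule inj_on_subset[OF inj], simp)
  ultimately show ?thesis by (simp add: card_cartesian_product Pc_def)
qed




lemma Qc_lower_real: assumes "m \<ge> 4" shows "real (Qc m) \<ge> 2 ^ m / (256 * real m)"
proof -
  obtain k where k: "m = Suc k" "k \<ge> 3" using assms by (cases m) auto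
  have P: "real (Pc m) = a k * 2 ^ k" using k by (simp add: Pc_Suc a_def)
  have al: "a k \<ge> 1 / (4 * sqrt 2 * sqrt (2 * real k + 1))" by (rule a_lower[OF k(2)])
  have pos: "4 * sqrt 2 * sqrt (2 * real k + 1) > 0" by simp
  have "(a k)^2 \<ge> (1 / (4 * sqrt 2 * sqrt (2 * real k + 1)))^2"
    using al by (intro power_mono) auto
  also have "(1 / (4 * sqrt 2 * sqrt (2 * real k + 1)))^2 = 1 / (32 * (2 * real k + 1))"
    by (simp add: power_divide power_mult_distrib)
  finally have a2: "(a k)^2 \<ge> 1 / (32 * (2 * real k + 1))" .
  have "real (Pc m * Pc m) \<le> real (2 ^ m * Qc m)" using Qc_lower[of m] by linarith
  then have "(a k * 2 ^ k)^2 \<le> 2 ^ m * real (Qc m)" using P by (simp add: power2_eq_square)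
  moreover have f4: "(4::real) ^ k = 2 ^ (k + k)"
  proof -
    have "(4::real)^k = (2*2)^k" by simp
    also have "\<dots> = 2^(k+k)" by (simp only: power_mult_distrib power_add)
    finally show ?thesis .
  qed
  ultimately have "(a k)^2 * 4 ^ k \<le> 2 * 2 ^ k * real (Qc m)"
    using k by (simp add: power_mult_distrib power2_eq_square mult_ac flip: power_add)
  moreover have "(4::real) ^ k = 2 ^ k * 2 ^ k" using f4 by (simp add: power_add)
  ultimately have "(a k)^2 * 2 ^ k \<le> 2 * real (Qc m)" by (simp add: mult_ac)
  moreover have "1 / (32 * (2 * real k + 1)) * 2 ^ k \<le> (a k)^2 * 2 ^ k"
    using a2 by (intro mult_right_mono) auto
  ultimately have "2 ^ k / (32 * (2 * real k + 1)) \<le> 2 * real (Qc m)" by simp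
  then have "2 ^ k / (32 * (2 * real k + 1)) / 2 \<le> real (Qc m)" by (simp add: divide_le_eq algebra_simps)
  moreover have "2 ^ k / (32 * (2 * real k + 1)) / 2 = 2 ^ k / (64 * (2 * real k + 1))" by simp
  ultimately have X: "2 ^ k / (64 * (2 * real k + 1)) \<le> real (Qc m)" by simp
  have "2 ^ m / (256 * real m) \<le> 2 ^ k / (64 * (2 * real k + 1))"
    using k by (simp add: field_simps)
  then show ?thesis using X by (rule order.trans)
qed

lemma Pc_sq: "j \<ge> 1 \<Longrightarrow> j * Pc j ^ 2 \<le> 2 * 4 ^ (j - 1)"
  using Nc_upper[of "j - 1"] by (cases j) (auto simp: Pc_Suc)

lemma Qc_upper_nat: assumes "m \<ge> 2" shows "Qc m * m \<le> 2 * 2 ^ m"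
proof -
  define t where "t = m div 2"
  have t1: "t \<ge> 1" "m - t \<ge> 1" "t \<le> m" using assms by (auto simp: t_def)
  have q: "Qc m \<le> Pc t * Pc (m - t)" using Qc_upper t1 by simp
  have "Qc m ^ 2 * (t * (m - t)) \<le> (Pc t * Pc (m - t))^2 * (t * (m - t))"
    using q by (intro mult_right_mono power_mono) auto
  also have "\<dots> = (t * Pc t ^ 2) * ((m - t) * Pc (m - t) ^ 2)" by (simp add: power_mult_distrib mult_ac)
  also have "\<dots> \<le> (2 * 4 ^ (t - 1)) * (2 * 4 ^ (m - t - 1))"
    by (rule mult_le_mono[OF Pc_sq[OF t1(1)] Pc_sq[OF t1(2)]])
  also have "\<dots> = 4 ^ (t - 1 + (m - t - 1) + 1)" by (simp add: power_add)
  also have "t - 1 + (m - t - 1) + 1 = m - 1" using t1 by simp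
  finally have A: "Qc m ^ 2 * (t * (m - t)) \<le> 4 ^ (m - 1)" .
  have B: "m * m \<le> 8 * (t * (m - t))"
  proof -
    have "2 * t + 1 \<ge> m" "2 * (m - t) \<ge> m" by (auto simp: t_def)
    then have c1: "(m - 1) * m \<le> (2 * t) * (2 * (m - t))" by (intro mult_le_mono) auto
    have "m \<le> 2 * (m - 1)" using assms by simp
    then have c2: "m * m \<le> (2 * (m - 1)) * m" by (rule mult_right_mono) simp
    have "(2 * t) * (2 * (m - t)) = 4 * (t * (m - t))" by simp
    then show ?thesis using c1 c2 by linarith
  qed
  have "(Qc m * m)^2 = Qc m ^ 2 * (m * m)" by (simp add: power2_eq_square)
  also have "\<dots> \<le> Qc m ^ 2 * (8 * (t * (m - t)))" using B by simp
  also have "\<dots> \<le> 8 * 4 ^ (m - 1)" using A by simp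
  also have "\<dots> \<le> (2 * 2 ^ m)^2"
  proof -
    have e: "(2::nat)^m * 2^m = 4^m" by (simp add: power_mult_distrib[symmetric])
    have "(2 * 2 ^ m)^2 = 4 * ((2::nat)^m * 2^m)" by (simp add: power2_eq_square)
    then have "(2 * 2 ^ m)^2 = (4::nat) * 4 ^ m" using e by simp
    also have "4 ^ m = 4 * 4 ^ (m - 1)" using assms by (cases m) auto
    finally show ?thesis by simp
  qed
  finally show ?thesis by (rule power2_le_imp_le) simp
qed




lemma L_sums: assumes "0 \<le> x" "x \<le> 20" "x \<noteq> 1" shows "\<exists>a\<in>Lset. \<exists>b\<in>Lset. a + b = (x::int)"
proof -
  have "x \<in> {0,2,3,4,5,6,7,8,9,10,11,12,13,14,15,16,17,18,19,20}" using assms by simp presburger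
  then show ?thesis
  proof (elim insertE)
    assume h: "x = 0" show ?thesis by (rule bexI[where x=0], rule bexI[where x=0]) (auto simp: Lset_def h)
  next
    assume h: "x = 2" show ?thesis by (rule bexI[where x=0], rule bexI[where x=2]) (auto simp: Lset_def h)
  next
    assume h: "x = 3" show ?thesis by (rule bexI[where x=0], rule bexI[where x=3]) (auto simp: Lset_def h)
  next
    assume h: "x = 4" show ?thesis by (rule bexI[where x=2], rule bexI[where x=2]) (auto simp: Lset_def h)
  next
    assume h: "x = 5" show ?thesis by (rule bexI[where x=2], rule bexI[where x=3]) (auto simp: Lset_def h)
  next
    assume h: "x = 6" show ?thesis by (rule bexI[where x=3], rule bexI[where x=3]) (auto simp: Lset_def h)
  next
    assume h: "x = 7" show ?thesis by (rule bexI[where x=0], rule bexI[where x=7]) (auto simp: Lset_def h)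
  next
    assume h: "x = 8" show ?thesis by (rule bexI[where x=0], rule bexI[where x=8]) (auto simp: Lset_def h)
  next
    assume h: "x = 9" show ?thesis by (rule bexI[where x=0], rule bexI[where x=9]) (auto simp: Lset_def h)
  next
    assume h: "x = 10" show ?thesis by (rule bexI[where x=0], rule bexI[where x=10]) (auto simp: Lset_def h)
  next
    assume h: "x = 11" show ?thesis by (rule bexI[where x=3], rule bexI[where x=8]) (auto simp: Lset_def h)
  next
    assume h: "x = 12" show ?thesis by (rule bexI[where x=2], rule bexI[where x=10]) (auto simp: Lset_def h)
  next
    assume h: "x = 13" show ?thesis by (rule bexI[where x=3], rule bexI[where x=10]) (auto simp: Lset_def h)
  next
    assume h: "x = 14" show ?thesis by (rule bexI[where x=7], rule bexI[where x=7]) (auto simp: Lset_def h)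
  next
    assume h: "x = 15" show ?thesis by (rule bexI[where x=7], rule bexI[where x=8]) (auto simp: Lset_def h)
  next
    assume h: "x = 16" show ?thesis by (rule bexI[where x=8], rule bexI[where x=8]) (auto simp: Lset_def h)
  next
    assume h: "x = 17" show ?thesis by (rule bexI[where x=8], rule bexI[where x=9]) (auto simp: Lset_def h)
  next
    assume h: "x = 18" show ?thesis by (rule bexI[where x=9], rule bexI[where x=9]) (auto simp: Lset_def h)
  next
    assume h: "x = 19" show ?thesis by (rule bexI[where x=9], rule bexI[where x=10]) (auto simp: Lset_def h)
  next
    assume h: "x = 20" show ?thesis by (rule bexI[where x=10], rule bexI[where x=10]) (auto simp: Lset_def h)
  next
    assume "x \<in> {}" then show ?thesis by simp
  qed
qed

lemma R_sums: assumes "0 \<le> d" "d \<le> 20" shows "\<exists>a\<in>Rset n. \<exists>b\<in>Rset n. a + b = 2 * int n - 2 - (d::int)"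
proof -
  have "d \<in> {0,1,2,3,4,5,6,7,8,9,10,11,12,13,14,15,16,17,18,19,20}" using assms by simp presburger
  then show ?thesis
  proof (elim insertE)
    assume h: "d = 0" show ?thesis by (rule bexI[where x="int n - 1 - 0"], rule bexI[where x="int n - 1 - 0"]) (auto simp: Rset_def Let_def h)
  next
    assume h: "d = 1" show ?thesis by (rule bexI[where x="int n - 1 - 0"], rule bexI[where x="int n - 1 - 1"]) (auto simp: Rset_def Let_def h)
  next
    assume h: "d = 2" show ?thesis by (rule bexI[where x="int n - 1 - 1"], rule bexI[where x="int n - 1 - 1"]) (auto simp: Rset_def Let_def h)
  next
    assume h: "d = 3" show ?thesis by (rule bexI[where x="int n - 1 - 1"], rule bexI[where x="int n - 1 - 2"]) (auto simp: Rset_def Let_def h)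
  next
    assume h: "d = 4" show ?thesis by (rule bexI[where x="int n - 1 - 2"], rule bexI[where x="int n - 1 - 2"]) (auto simp: Rset_def Let_def h)
  next
    assume h: "d = 5" show ?thesis by (rule bexI[where x="int n - 1 - 0"], rule bexI[where x="int n - 1 - 5"]) (auto simp: Rset_def Let_def h)
  next
    assume h: "d = 6" show ?thesis by (rule bexI[where x="int n - 1 - 1"], rule bexI[where x="int n - 1 - 5"]) (auto simp: Rset_def Let_def h)
  next
    assume h: "d = 7" show ?thesis by (rule bexI[where x="int n - 1 - 0"], rule bexI[where x="int n - 1 - 7"]) (auto simp: Rset_def Let_def h)
  next
    assume h: "d = 8" show ?thesis by (rule bexI[where x="int n - 1 - 0"], rule bexI[where x="int n - 1 - 8"]) (auto simp: Rset_def Let_def h)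
  next
    assume h: "d = 9" show ?thesis by (rule bexI[where x="int n - 1 - 0"], rule bexI[where x="int n - 1 - 9"]) (auto simp: Rset_def Let_def h)
  next
    assume h: "d = 10" show ?thesis by (rule bexI[where x="int n - 1 - 0"], rule bexI[where x="int n - 1 - 10"]) (auto simp: Rset_def Let_def h)
  next
    assume h: "d = 11" show ?thesis by (rule bexI[where x="int n - 1 - 1"], rule bexI[where x="int n - 1 - 10"]) (auto simp: Rset_def Let_def h)
  next
    assume h: "d = 12" show ?thesis by (rule bexI[where x="int n - 1 - 2"], rule bexI[where x="int n - 1 - 10"]) (auto simp: Rset_def Let_def h)
  next
    assume h: "d = 13" show ?thesis by (rule bexI[where x="int n - 1 - 5"], rule bexI[where x="int n - 1 - 8"]) (auto simp: Rset_def Let_def h)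
  next
    assume h: "d = 14" show ?thesis by (rule bexI[where x="int n - 1 - 7"], rule bexI[where x="int n - 1 - 7"]) (auto simp: Rset_def Let_def h)
  next
    assume h: "d = 15" show ?thesis by (rule bexI[where x="int n - 1 - 5"], rule bexI[where x="int n - 1 - 10"]) (auto simp: Rset_def Let_def h)
  next
    assume h: "d = 16" show ?thesis by (rule bexI[where x="int n - 1 - 8"], rule bexI[where x="int n - 1 - 8"]) (auto simp: Rset_def Let_def h)
  next
    assume h: "d = 17" show ?thesis by (rule bexI[where x="int n - 1 - 7"], rule bexI[where x="int n - 1 - 10"]) (auto simp: Rset_def Let_def h)
  next
    assume h: "d = 18" show ?thesis by (rule bexI[where x="int n - 1 - 8"], rule bexI[where x="int n - 1 - 10"]) (auto simp: Rset_def Let_def h)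
  next
    assume h: "d = 19" show ?thesis by (rule bexI[where x="int n - 1 - 9"], rule bexI[where x="int n - 1 - 10"]) (auto simp: Rset_def Let_def h)
  next
    assume h: "d = 20" show ?thesis by (rule bexI[where x="int n - 1 - 10"], rule bexI[where x="int n - 1 - 10"]) (auto simp: Rset_def Let_def h)
  next
    assume "d \<in> {}" then show ?thesis by simp
  qed
qed

lemma majority_sum:
  fixes M :: "int set" and lo hi :: int
  assumes "2 * card (M \<inter> {lo..hi}) > card {lo..hi}"
  shows "\<exists>a\<in>M. \<exists>b\<in>M. a + b = lo + hi"
proof (rule ccontr)
  assume no: "\<not> ?thesis"
  let ?I = "{lo..hi}"
  let ?f = "\<lambda>a. lo + hi - a"
  have inj: "inj_on ?f (M \<inter> ?I)" by (auto simp: inj_on_def)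
  have img: "?f ` (M \<inter> ?I) \<subseteq> ?I - M"
  proof
    fix y assume "y \<in> ?f ` (M \<inter> ?I)"
    then obtain a where a: "a \<in> M" "a \<in> ?I" "y = lo + hi - a" by auto
    then have "y \<notin> M" using no by force
    then show "y \<in> ?I - M" using a by auto
  qed
  have "card (M \<inter> ?I) = card (?f ` (M \<inter> ?I))" using inj by (simp add: card_image)
  also have "\<dots> \<le> card (?I - M)" using img by (intro card_mono) auto
  also have "\<dots> = card ?I - card (?I \<inter> M)" by (simp add: card_Diff_subset_Int)
  finally have "card (M \<inter> ?I) \<le> card ?I - card (M \<inter> ?I)" by (simp add: Int_commute)
  then show False using assms by linarith
qed

lemma mstd_part:
  assumes n: "n \<ge> 24" and g: "good_middle n M"
  shows "MSTD (Lset \<union> M \<union> Rset n)"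
proof -
  define N where "N = int n"
  define S where "S = Lset \<union> M \<union> Rset n"
  have Nge: "N \<ge> 24" using n by (simp add: N_def)
  have Msub: "M \<subseteq> {11 .. N - 12}" using g by (simp add: good_middle_def N_def)
  have R: "Rset n = {N-11, N-10, N-9, N-8, N-6, N-3, N-2, N-1}" by (simp add: Rset_def N_def Let_def)
  have Ssub: "S \<subseteq> {0..N-1}" using Msub Nge by (auto simp: S_def R Lset_def)
  have fS: "finite S" using Ssub finite_subset by blast
  have nodiff: "a - b \<noteq> N - 7" if "a \<in> S" "b \<in> S" for a b
  proof -
    have a: "a \<in> Lset \<or> a \<in> M \<or> a \<in> Rset n" and b: "b \<in> Lset \<or> b \<in> M \<or> b \<in> Rset n"
      using that by (auto simp: S_def)
    have "a \<le> N - 1" "b \<ge> 0" using that Ssub by auto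
    show ?thesis
    proof (cases "a \<in> M \<or> b \<in> M")
      case True
      then show ?thesis using Msub \<open>a \<le> N - 1\<close> \<open>b \<ge> 0\<close> by auto
    next
      case False
      then have "a \<in> Lset \<union> Rset n" "b \<in> Lset \<union> Rset n" using a b by auto
      then show ?thesis using Nge unfolding R Lset_def by auto
    qed
  qed
  have dsub: "diffset S \<subseteq> {-(N-1)..N-1} - {N-7, -(N-7)}"
  proof
    fix d assume "d \<in> diffset S"
    then obtain a b where ab: "a \<in> S" "b \<in> S" "d = a - b" by (auto simp: diffset_def)
    have "d \<noteq> N - 7" using nodiff ab by simp
    moreover have "d \<noteq> -(N - 7)" using nodiff[OF ab(2) ab(1)] ab by simp
    moreover have "d \<in> {-(N-1)..N-1}" proof - have "a \<in> {0..N-1}" "b \<in> {0..N-1}" using ab Ssub by auto then show ?thesis using ab by auto qed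
    ultimately show "d \<in> {-(N-1)..N-1} - {N-7, -(N-7)}" by simp
  qed
  have k_pre: "2 * card (M \<inter> {11 .. 10 + int k}) > card {11 .. 10 + int k}
      \<and> 2 * card (M \<inter> {N - 11 - int k .. N - 12}) > card {N - 11 - int k .. N - 12}"
    if "1 \<le> k" "k \<le> n - 22" for k
    using g that unfolding good_middle_def N_def by blast
  have m11: "11 \<in> M"
  proof -
    have "2 * card (M \<inter> {11 .. 11}) > card {11 .. (11::int)}" using k_pre[of 1] n by simp
    then show ?thesis by (cases "11 \<in> M") auto
  qed
  have mN12: "N - 12 \<in> M"
  proof -
    have "2 * card (M \<inter> {N - 12 .. N - 12}) > card {N - 12 .. N - 12}" using k_pre[of 1] n by simp
    then show ?thesis by (cases "N - 12 \<in> M") auto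
  qed
  have ssub: "{0..2*N-2} - {1} \<subseteq> sumset S"
  proof
    fix x assume x: "x \<in> {0..2*N-2} - {1}"
    have "\<exists>a\<in>S. \<exists>b\<in>S. a + b = x"
    proof -
      consider "x \<le> 20" | "x = 21" | "22 \<le> x \<and> x \<le> N - 1" | "N - 1 \<le> x \<and> x \<le> 2*N - 24"
        | "x = 2*N - 23" | "x \<ge> 2*N - 22" by linarith
      then show ?thesis
      proof cases
        case 1 then show ?thesis using L_sums[of x] x by (auto simp: S_def)
      next
        case 2 then show ?thesis using m11 by (intro bexI[where x=10] bexI[where x=11]) (auto simp: S_def Lset_def)
      next
        case 3
        define k where "k = nat (x - 21)"
        have k: "1 \<le> k" "k \<le> n - 22" "10 + int k = x - 11" using 3 by (auto simp: k_def N_def)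
        have "2 * card (M \<inter> {11 .. x - 11}) > card {11 .. x - 11}" using k_pre[OF k(1,2)] k(3) by simp
        from majority_sum[OF this] show ?thesis by (auto simp: S_def)
      next
        case 4
        define k where "k = nat (2*N - 23 - x)"
        have k: "1 \<le> k" "k \<le> n - 22" "N - 11 - int k = x - N + 12" using 4 Nge by (auto simp: k_def N_def)
        have "2 * card (M \<inter> {x - N + 12 .. N - 12}) > card {x - N + 12 .. N - 12}" using k_pre[OF k(1,2)] k(3) by simp
        from majority_sum[OF this] show ?thesis by (auto simp: S_def)
      next
        case 5 then show ?thesis using mN12
          by (intro bexI[where x="N-11"] bexI[where x="N-12"]) (auto simp: S_def R)
      next
        case 6
        have "\<exists>a\<in>Rset n. \<exists>b\<in>Rset n. a + b = 2 * int n - 2 - (2*N - 2 - x)"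
          using 6 x by (intro R_sums) (auto simp: N_def)
        then show ?thesis by (auto simp: S_def N_def)
      qed
    qed
    then show "x \<in> sumset S" by (auto simp: sumset_def)
  qed
  have sfin: "finite (sumset S)"
  proof -
    have "sumset S \<subseteq> {0..2*N-2}" proof fix s assume "s \<in> sumset S" then obtain a b where ab: "a \<in> S" "b \<in> S" "s = a + b" by (auto simp: sumset_def) then have "a \<in> {0..N-1}" "b \<in> {0..N-1}" using Ssub by auto then show "s \<in> {0..2*N-2}" using ab by auto qed
    then show ?thesis using finite_subset by blast
  qed
  have c1: "card (sumset S) \<ge> nat (2*N - 2)"
  proof -
    have "card ({0..2*N-2} - {1}) = nat (2*N-2)" using Nge by simp
    then show ?thesis using card_mono[OF sfin ssub] by simp
  qed
  have c2: "card (diffset S) \<le> nat (2*N - 3)"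
  proof -
    have "card ({-(N-1)..N-1} - {N-7, -(N-7)}) = nat (2*N-3)" using Nge by (simp add: card_Diff_subset)
    moreover have "card (diffset S) \<le> card ({-(N-1)..N-1} - {N-7, -(N-7)})"
      by (rule card_mono[OF _ dsub]) simp
    ultimately show ?thesis by simp
  qed
  have "card (sumset S) > card (diffset S)" using c1 c2 Nge by linarith
  then show ?thesis using fS unfolding MSTD_def S_def by simp
qed




definition toSet :: "bool list \<Rightarrow> int set" where
  "toSet xs = (\<lambda>i. 11 + int i) ` {i. i < length xs \<and> xs ! i}"

lemma card_toSet: "card (toSet xs) = length (filter (\<lambda>b. b) xs)"
  unfolding toSet_def by (simp add: card_image inj_on_def length_filter_conv_card)

lemma hs_count: "hs xs = 2 * int (length (filter (\<lambda>b. b) xs)) - int (length xs)"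
  by (induction xs) (auto simp: bv_def)

lemma toSet_take: "k \<le> length xs \<Longrightarrow> toSet xs \<inter> {11..10 + int k} = toSet (take k xs)"
  unfolding toSet_def by auto

lemma toSet_drop: "j \<le> length xs \<Longrightarrow>
   toSet xs \<inter> {11 + int j..10 + int (length xs)} = (\<lambda>x. x + int j) ` toSet (drop j xs)"
proof (rule set_eqI, rule iffI)
  fix y assume j: "j \<le> length xs" and "y \<in> toSet xs \<inter> {11 + int j..10 + int (length xs)}"
  then obtain i where i: "i < length xs" "xs ! i" "y = 11 + int i" "j \<le> i" by (auto simp: toSet_def)
  then have "11 + int (i - j) \<in> toSet (drop j xs)" unfolding toSet_def using j
    by (intro image_eqI[where x="i - j"]) auto
  then show "y \<in> (\<lambda>x. x + int j) ` toSet (drop j xs)" using i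
    by (intro image_eqI[where x="11 + int (i - j)"]) auto
next
  fix y assume j: "j \<le> length xs" and "y \<in> (\<lambda>x. x + int j) ` toSet (drop j xs)"
  then obtain i where i: "i < length xs - j" "xs ! (j + i)" "y = 11 + int i + int j" by (auto simp: toSet_def)
  then show "y \<in> toSet xs \<inter> {11 + int j..10 + int (length xs)}" unfolding toSet_def
    by (auto intro!: image_eqI[where x="j + i"])
qed

lemma aux1: "k \<le> n - 22 \<Longrightarrow> 22 \<le> n \<Longrightarrow> int n - 11 - int k = 11 + int (n - 22 - k)" by simp
lemma aux2: "length xs = n - 22 \<Longrightarrow> 22 \<le> n \<Longrightarrow> int n - 12 = 10 + int (length xs)" by simp

lemma good_iff:
  assumes L: "length xs = n - 22" and n: "n \<ge> 22"
  shows "good_middle n (toSet xs) \<longleftrightarrow> prefpos xs \<and> sufpos xs"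
proof -
  let ?m = "n - 22"
  have N: "int n = int ?m + 22" using n by simp
  have sub: "toSet xs \<subseteq> {11 .. int n - 12}" using L n by (auto simp: toSet_def)
  have pre: "2 * card (toSet xs \<inter> {11 .. 10 + int k}) > card {11 .. 10 + int k} \<longleftrightarrow> hs (take k xs) > 0"
    if "k \<le> ?m" for k
  proof -
    have "card (toSet xs \<inter> {11 .. 10 + int k}) = length (filter (\<lambda>b. b) (take k xs))"
      using that L by (simp add: toSet_take card_toSet)
    moreover have "card {11 .. 10 + int k} = k" by simp
    moreover have "hs (take k xs) = 2 * int (length (filter (\<lambda>b. b) (take k xs))) - int k"
      using that L by (simp add: hs_count min_def)
    ultimately show ?thesis by linarith
  qed
  have suf: "2 * card (toSet xs \<inter> {int n - 11 - int k .. int n - 12}) > card {int n - 11 - int k .. int n - 12}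
       \<longleftrightarrow> hs (drop (length xs - k) xs) > 0"
    if "k \<le> ?m" for k
  proof -
    have e: "{int n - 11 - int k .. int n - 12} = {11 + int (?m - k) .. 10 + int (length xs)}"
      by (simp only: aux1[OF that n] aux2[OF L n])
    have "card (toSet xs \<inter> {int n - 11 - int k .. int n - 12}) = card (toSet (drop (?m - k) xs))"
      unfolding e using L by (subst toSet_drop) (auto simp: card_image)
    also have "\<dots> = length (filter (\<lambda>b. b) (drop (length xs - k) xs))" using L by (simp add: card_toSet)
    finally have c: "card (toSet xs \<inter> {int n - 11 - int k .. int n - 12}) = length (filter (\<lambda>b. b) (drop (length xs - k) xs))" .
    moreover have "card {int n - 11 - int k .. int n - 12} = k" by simp
    moreover have "hs (drop (length xs - k) xs) = 2 * int (length (filter (\<lambda>b. b) (drop (length xs - k) xs))) - int k"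
      using that L by (simp add: hs_count)
    ultimately show ?thesis by linarith
  qed
  show ?thesis unfolding good_middle_def prefpos_def sufpos_def
    using sub pre suf L by auto
qed

lemma toSet_inj: "inj_on toSet (Lm m)"
proof (rule inj_onI)
  fix xs ys assume "xs \<in> Lm m" "ys \<in> Lm m" and e: "toSet xs = toSet ys"
  then have L: "length xs = m" "length ys = m" by (auto simp: Lm_def)
  have mem: "11 + int i \<in> toSet zs \<longleftrightarrow> i < length zs \<and> zs ! i" for i zs
    by (auto simp: toSet_def)
  show "xs = ys"
  proof (rule nth_equalityI)
    show "length xs = length ys" using L by simp
    fix i assume "i < length xs"
    then show "xs ! i = ys ! i" using mem[of i xs] mem[of i ys] e L by auto
  qed
qed

lemma good_image:
  assumes n: "n \<ge> 22"
  shows "{M. good_middle n M} = toSet ` {xs \<in> Lm (n - 22). prefpos xs \<and> sufpos xs}"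
proof (rule set_eqI, rule iffI)
  fix M assume "M \<in> {M. good_middle n M}"
  then have g: "good_middle n M" by simp
  then have sub: "M \<subseteq> {11 .. int n - 12}" by (simp add: good_middle_def)
  define xs where "xs = map (\<lambda>i. 11 + int i \<in> M) [0..<n-22]"
  have L: "length xs = n - 22" by (simp add: xs_def)
  have "toSet xs = M"
  proof (rule set_eqI, rule iffI)
    fix y assume "y \<in> toSet xs" then show "y \<in> M" by (auto simp: toSet_def xs_def)
  next
    fix y assume y: "y \<in> M"
    then have "11 \<le> y" "y \<le> int n - 12" using sub by auto
    then have "nat (y - 11) < n - 22" "y = 11 + int (nat (y - 11))" by auto
    then show "y \<in> toSet xs" using y unfolding toSet_def xs_def
      by (intro image_eqI[where x="nat (y - 11)"]) auto
  qed
  then show "M \<in> toSet ` {xs \<in> Lm (n - 22). prefpos xs \<and> sufpos xs}"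
    using g good_iff[OF L n] L by (auto simp: Lm_def)
next
  fix M assume "M \<in> toSet ` {xs \<in> Lm (n - 22). prefpos xs \<and> sufpos xs}"
  then show "M \<in> {M. good_middle n M}" using good_iff n by (auto simp: Lm_def)
qed

lemma card_family: assumes n: "n \<ge> 22" shows "card (mstd_family n) = Qc (n - 22)"
proof -
  have fam: "mstd_family n = (\<lambda>M. Lset \<union> M \<union> Rset n) ` {M. good_middle n M}"
    unfolding mstd_family_def by auto
  have inj: "inj_on (\<lambda>M. Lset \<union> M \<union> Rset n) {M. good_middle n M}"
  proof (rule inj_onI)
    fix M M' assume g: "M \<in> {M. good_middle n M}" "M' \<in> {M. good_middle n M}"
      and e: "Lset \<union> M \<union> Rset n = Lset \<union> M' \<union> Rset n"
    have r: "(Lset \<union> K \<union> Rset n) \<inter> {11 .. int n - 12} = K" if "good_middle n K" for K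
    proof -
      have "K \<subseteq> {11 .. int n - 12}" using that by (simp add: good_middle_def)
      moreover have "Lset \<inter> {11 .. int n - 12} = {}" by (auto simp: Lset_def)
      moreover have "Rset n \<inter> {11 .. int n - 12} = {}" by (auto simp: Rset_def Let_def)
      ultimately show ?thesis by blast
    qed
    from r[of M] r[of M'] g e show "M = M'" by (metis mem_Collect_eq)
  qed
  have "card (mstd_family n) = card {M. good_middle n M}" unfolding fam using inj by (rule card_image)
  also have "\<dots> = card {xs \<in> Lm (n - 22). prefpos xs \<and> sufpos xs}"
    unfolding good_image[OF n] by (rule card_image) (rule inj_on_subset[OF toSet_inj], auto)
  finally show ?thesis by (simp add: Qc_def)
qed

theorem theorem2:
  shows "(\<forall>n::nat. n \<ge> 24 \<longrightarrow> (\<forall>M. good_middle n M \<longrightarrow> MSTD (Lset \<union> M \<union> Rset n)))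
         \<and> (\<lambda>n. real (card (mstd_family n))) \<in> \<Theta>(\<lambda>n. 2 ^ n / real n)"
proof
  show "\<forall>n::nat. n \<ge> 24 \<longrightarrow> (\<forall>M. good_middle n M \<longrightarrow> MSTD (Lset \<union> M \<union> Rset n))"
    using mstd_part by blast
  show "(\<lambda>n. real (card (mstd_family n))) \<in> \<Theta>(\<lambda>n. 2 ^ n / real n)"
  proof (rule bigthetaI'[of "1 / 2^30" 1])
    show "(0::real) < 1 / 2^30" "(0::real) < 1" by simp_all
    show "\<forall>\<^sub>F n in at_top. 1 / 2 ^ 30 * norm (2 ^ n / real n) \<le> norm (real (card (mstd_family n))) \<and>
         norm (real (card (mstd_family n))) \<le> 1 * norm ((2::real) ^ n / real n)"
      unfolding eventually_at_top_linorder
    proof (intro exI[of _ 44] allI impI)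
      fix n :: nat assume n: "n \<ge> 44"
      define m where "m = n - 22"
      have mn: "n = m + 22" "m \<ge> 22" using n by (auto simp: m_def)
      have c: "real (card (mstd_family n)) = real (Qc m)" using card_family[of n] n by (simp add: m_def)
      have p2: "(2::real) ^ n = 2 ^ 22 * 2 ^ m" by (simp add: mn power_add)
      have lo: "real (Qc m) \<ge> 2 ^ m / (256 * real m)" using Qc_lower_real mn by simp
      have up: "real (Qc m) * real m \<le> 2 * 2 ^ m"
      proof -
        have "real (Qc m * m) \<le> real (2 * 2 ^ m)" using Qc_upper_nat[of m] mn by linarith
        then show ?thesis by simp
      qed
      have rn: "real n = real m + 22" using mn by simp
      have L: "1 / 2 ^ 30 * (2 ^ n / real n) \<le> real (Qc m)"
      proof -
        have "1 / 2 ^ 30 * (2 ^ n / real n) = 2 ^ m / (256 * real n)" by (simp add: p2 field_simps)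
        also have "\<dots> \<le> 2 ^ m / (256 * real m)" using mn by (intro divide_left_mono) (auto simp: rn)
        finally show ?thesis using lo by linarith
      qed
      have U: "real (Qc m) \<le> 2 ^ n / real n"
      proof -
        have "real (Qc m) \<le> 2 * 2 ^ m / real m" using up mn by (simp add: field_simps)
        also have "\<dots> \<le> 4 * 2 ^ m / real n" using mn by (simp add: field_simps rn)
        also have "\<dots> \<le> 2 ^ n / real n" proof (rule divide_right_mono) show "4 * 2 ^ m \<le> (2::real) ^ n" unfolding p2 by simp qed simp
        finally show ?thesis .
      qed
      show "1 / 2 ^ 30 * norm (2 ^ n / real n) \<le> norm (real (card (mstd_family n))) \<and>
         norm (real (card (mstd_family n))) \<le> 1 * norm ((2::real) ^ n / real n)"
        using L U c by simp
    qed
  qed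
qed


end
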